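(* Let $c>0$, $\gamma>0$, $T>0$, and let $\{\xi_{tT}\}_{0\le t\le T}$ be a stable-1/2 random bridge with activity parameter $c$ whose terminal law has density $f_{GIG}(z;-\tfrac12,cT,\gamma)$. Then for $0\le s<t<T$, $$\mathbb{Q}[\xi_{tT}\in dy\mid \xi_{sT}=x]=q_{t-s}(y-x)\,dy,$$ i.e. $\{\xi_{tT}\}$ is an inverse-Gaussian process (a Lévy process whose increments over intervals of length $u$ have density $q_u$).
   Context: Let $f_t(x)=\mathbf 1_{\{x>0\}}\frac{ct}{\sqrt{2\pi}x^{3/2}}\exp\left(-\frac{c^2t^2}{2x}\right)$ be the density of $S_t$ for a stable-1/2 subordinator $\{S_t\}$ with activity parameter $c>0$ (a Lévy process with $\mathbb{E}[e^{-\lambda S_t}]=\exp(-ct\sqrt{\lambda}/\sqrt2)$). A process $\{\xi_{tT}\}_{0\le t\le T}$ is a stable-1/2 random bridge with terminal law $\nu$ if $\xi_{TT}$ has law $\nu$ and, for $\nu$-a.e. $z$, conditionally on $\xi_{TT}=z$ its finite-dimensional distributions on $(0,T)$ coincide with those of $\{S_t\}$ conditioned on $S_T=z$. The generalized inverse-Gaussian density is $f_{GIG}(x;\lambda,\delta,\gamma)=\mathbf 1_{\{x>0\}}(\gamma/\delta)^{\lambda}\frac{1}{2K_\lambda(\gamma\delta)}x^{\lambda-1}\exp\left(-\tfrac12(\delta^2x^{-1}+\gamma^2x)\right)$, with $K_\lambda$ the modified Bessel function of the third kind. The inverse-Gaussian density is $q_t(x)=\mathbf 1_{\{x>0\}}\frac{ct}{\sqrt{2\pi}}x^{-3/2}\exp\left(-\frac{\gamma^2}{2x}\left(x-\frac{c}{\gamma}t\right)^2\right)=f_{GIG}(x;-\tfrac12,ct,\gamma)$.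 *)

theory Defs
  imports "HOL-Probability.Probability"
begin

definition stable_half_dens :: "real \<Rightarrow> real \<Rightarrow> real \<Rightarrow> real" where
  "stable_half_dens c t x =
     (if x > 0 then c * t / (sqrt (2 * pi) * x powr (3/2)) * exp (- (c\<^sup>2 * t\<^sup>2) / (2 * x))
      else 0)"

definition besselK :: "real \<Rightarrow> real \<Rightarrow> real" where
  "besselK lam x = (LBINT u:{0<..}. exp (- x * cosh u) * cosh (lam * u))"

definition f_GIG :: "real \<Rightarrow> real \<Rightarrow> real \<Rightarrow> real \<Rightarrow> real" where
  "f_GIG x lam \<delta> \<gamma> =
     (if x > 0 then (\<gamma> / \<delta>) powr lam * (1 / (2 * besselK lam (\<gamma> * \<delta>)))
        * x powr (lam - 1) * exp (- (1/2) * (\<delta>\<^sup>2 / x + \<gamma>\<^sup>2 * x))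
      else 0)"

definition IG_dens :: "real \<Rightarrow> real \<Rightarrow> real \<Rightarrow> real \<Rightarrow> real" where
  "IG_dens c \<gamma> t x =
     (if x > 0 then c * t / sqrt (2 * pi) * x powr (-3/2)
        * exp (- (\<gamma>\<^sup>2 / (2 * x)) * (x - c / \<gamma> * t)\<^sup>2)
      else 0)"

(* Joint density of (S_{t_0},...,S_{t_{n-1}}, S_T) under the Levy bridge of the stable-1/2
   subordinator pinned at S_T = z, mixed over the terminal density p:
   prod_{i<=n} f_{tt_i - tt_{i-1}}(x_i - x_{i-1}) / f_T(x_n) * p(x_n),
   where tt_i = t_i (i<n), tt_n = T, tt_{-1} = 0, x_{-1} = 0. *)
definition bridge_joint_dens ::
  "real \<Rightarrow> real \<Rightarrow> (real \<Rightarrow> real) \<Rightarrow> nat \<Rightarrow> (nat \<Rightarrow> real) \<Rightarrow> (nat \<Rightarrow> real) \<Rightarrow> real" where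
  "bridge_joint_dens c T p n t x =
     (let tt = (\<lambda>i. if i < n then t i else T);
          tp = (\<lambda>i. if i = 0 then 0 else t (i - 1));
          xp = (\<lambda>i. if i = 0 then 0 else x (i - 1))
      in (\<Prod>i\<le>n. stable_half_dens c (tt i - tp i) (x i - xp i))
           / stable_half_dens c T (x n) * p (x n))"

(* For n = 0 this says
   xi_T has law p(z) dz. *)
definition stable_half_random_bridge ::
  "'a measure \<Rightarrow> real \<Rightarrow> real \<Rightarrow> (real \<Rightarrow> real) \<Rightarrow> (real \<Rightarrow> 'a \<Rightarrow> real) \<Rightarrow> bool" where
  "stable_half_random_bridge M c T p \<xi> \<longleftrightarrow>
     prob_space M \<and>
     (\<forall>t\<in>{0..T}. \<xi> t \<in> borel_measurable M) \<and>
     (AE \<omega> in M. \<xi> 0 \<omega> = 0) \<and>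
     (\<forall>n::nat. \<forall>t::nat \<Rightarrow> real.
        (\<forall>i<n. 0 < t i \<and> t i < T) \<and> (\<forall>i j. i < j \<and> j < n \<longrightarrow> t i < t j) \<longrightarrow>
        distr M (PiM {..n} (\<lambda>_. lborel)) (\<lambda>\<omega>. \<lambda>i\<in>{..n}. if i < n then \<xi> (t i) \<omega> else \<xi> T \<omega>)
          = density (PiM {..n} (\<lambda>_. lborel)) (\<lambda>x. ennreal (bridge_joint_dens c T p n t x)))"

end

theory Submission
  imports Defs
begin

lemma IG_meas[measurable]: "IG_dens c \<gamma> u \<in> borel_measurable borel"
  unfolding IG_dens_def[abs_def] by measurable

lemma powr32_old: "(x::real) > 0 \<Longrightarrow> x powr (-3/2) = 1 / (x * sqrt x)"
proof -
  assume x: "x > 0"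
  have e: "x powr 1 * x powr (1/2) * x powr (-3/2) = x powr (1 + 1/2 + (-3/2))"
    by (simp only: powr_add)
  have "(1 + 1/2 + (-3/2) :: real) = 0" by simp
  then have "x powr 1 * x powr (1/2) * x powr (-3/2) = 1" using e x by simp
  then have "x * sqrt x * x powr (-3/2) = 1" using x by (simp add: powr_half_sqrt)
  then show ?thesis using x by (simp add: field_simps)
qed

lemma IG_has_integral:
  fixes a b :: real assumes a: "a>0" and b: "b>0"
  shows "((\<lambda>x. a / sqrt (2*pi) * x powr (-3/2) * exp (- ((a - b*x)^2)/(2*x))) has_integral 1) {0<..}"
proof -
  define S where "S = {0::real<..}"
  define N where "N y = 1/sqrt(2*pi) * exp (- (y^2)/2)" for y :: real
  define \<phi> where "\<phi> x = b * sqrt x - a/sqrt x" for x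
  define \<phi>' where "\<phi>' x = b/(2* sqrt x) + a/(2*x* sqrt x)" for x
  have Sleb: "S \<in> sets lebesgue" by (simp add: S_def)
  have NN: "N = std_normal_density" by (auto simp: N_def std_normal_density_def fun_eq_iff)
  have Nint: "N absolutely_integrable_on UNIV \<and> integral UNIV N = 1"
  proof -
    have "integrable lborel N" unfolding NN by simp
    then show ?thesis unfolding absolutely_integrable_on_def
      by (simp add: integrable_on_lborel integral_lborel NN)
  qed
  have der: "(\<phi> has_field_derivative \<phi>' x) (at x within S)" if "x \<in> S" for x
  proof -
    have x: "x > 0" using that by (simp add: S_def)
    have "(\<phi> has_field_derivative (b * (inverse (sqrt x) / 2) - (- (a * (inverse (sqrt x) / 2)) / (sqrt x * sqrt x)))) (at x)"
      unfolding \<phi>_def[abs_def] using x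
      by (auto intro!: derivative_eq_intros DERIV_real_sqrt)
    moreover have "b * (inverse (sqrt x) / 2) - (- (a * (inverse (sqrt x) / 2)) / (sqrt x * sqrt x)) = \<phi>' x"
      using x by (simp add: \<phi>'_def field_simps)
    ultimately show ?thesis by (simp add: has_field_derivative_at_within)
  qed
  have mono: "\<phi> x < \<phi> y" if "x \<in> S" "y \<in> S" "x < y" for x y
  proof -
    have "sqrt x < sqrt y" "0 < sqrt x" using that by (auto simp: S_def)
    then have "b * sqrt x < b * sqrt y" "a / sqrt y < a / sqrt x" using a b
      by (auto simp: divide_strict_left_mono)
    then show ?thesis by (simp add: \<phi>_def)
  qed
  have inj: "inj_on \<phi> S"
    by (metis linorder_inj_onI' mono order_less_imp_not_eq)
  have surj: "\<phi> ` S = UNIV"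
  proof (intro set_eqI iffI)
    fix y :: real
    define D where "D = sqrt (y^2 + 4*a * b)"
    have D2: "D^2 = y^2+4*a * b" using a b by (simp add: D_def)
    have "y^2 < y^2 + 4 * a * b" using a b by simp
    then have "sqrt (y^2) < D" unfolding D_def by (rule real_sqrt_less_mono)
    then have "\<bar>y\<bar> < D" by simp
    then have yD: "y + D > 0" by linarith
    define z where "z = (y + D)/(2*b)"
    have z: "z > 0" using yD b by (simp add: z_def)
    have "\<phi> (z^2) = b*z - a/z" using z by (simp add: \<phi>_def)
    also have "\<dots> = y"
    proof -
      have "b*z*z - a - y*z = ((y+D)^2 - 2*y*(y+D) - 4*a*b)/(4*b)"
        unfolding z_def using b by (simp add: field_simps power2_eq_square)
      also have "\<dots> = (D^2 - y^2 - 4*a*b)/(4*b)" by (simp add: power2_eq_square algebra_simps)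
      also have "\<dots> = 0" using D2 by simp
      finally have "b*z*z - a = y*z" by simp
      then show ?thesis using z by (simp add: field_simps)
    qed
    finally show "y \<in> \<phi> ` S" using z by (metis S_def greaterThan_iff image_eqI zero_less_power)
  qed auto
  have "(\<lambda>x. \<bar>\<phi>' x\<bar> * N (\<phi> x)) absolutely_integrable_on S \<and> integral S (\<lambda>x. \<bar>\<phi>' x\<bar> * N (\<phi> x)) = 1"
    using has_absolute_integral_change_of_variables_1'[OF Sleb der inj] Nint surj by simp
  then have tot1: "(\<lambda>x. \<bar>\<phi>' x\<bar> * N (\<phi> x)) integrable_on S" "integral S (\<lambda>x. \<bar>\<phi>' x\<bar> * N (\<phi> x)) = 1"
    using set_lebesgue_integral_eq_integral(1) by blast+
  define h1 where "h1 x = b / (2 * sqrt x) * N (\<phi> x)" for x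
  define h2 where "h2 x = a / (2 * x * sqrt x) * N (\<phi> x)" for x
  have Npos: "N y \<ge> 0" for y by (simp add: N_def)
  have h1pos: "h1 x \<ge> 0" if "x \<in> S" for x using that a b Npos by (simp add: h1_def S_def)
  have h2pos: "h2 x \<ge> 0" if "x \<in> S" for x using that a b Npos by (simp add: h2_def S_def)
  have sum: "\<bar>\<phi>' x\<bar> * N (\<phi> x) = h1 x + h2 x" if "x \<in> S" for x
  proof -
    have "\<phi>' x > 0" using that a b by (simp add: \<phi>'_def S_def add_pos_pos)
    then show ?thesis by (simp add: h1_def h2_def \<phi>'_def algebra_simps)
  qed
  have c1: "continuous_on S h1" unfolding h1_def N_def \<phi>_def S_def
    by (intro continuous_intros; auto)
  have c2: "continuous_on S h2" unfolding h2_def N_def \<phi>_def S_def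
    by (intro continuous_intros; auto)
  have i1: "h1 absolutely_integrable_on S"
    by (rule measurable_bounded_by_integrable_imp_absolutely_integrable[OF
         continuous_imp_measurable_on_sets_lebesgue[OF c1 Sleb] Sleb tot1(1)])
       (use sum h1pos h2pos in auto)
  have i2: "h2 absolutely_integrable_on S"
    by (rule measurable_bounded_by_integrable_imp_absolutely_integrable[OF
         continuous_imp_measurable_on_sets_lebesgue[OF c2 Sleb] Sleb tot1(1)])
       (use sum h1pos h2pos in auto)
  have i1': "h1 integrable_on S" and i2': "h2 integrable_on S"
    using i1 i2 set_lebesgue_integral_eq_integral(1) by blast+
  have "integral S h1 + integral S h2 = 1"
    using tot1(2) integral_add[OF i1' i2'] integral_cong[of S "\<lambda>x. \<bar>\<phi>' x\<bar> * N (\<phi> x)" "\<lambda>x. h1 x + h2 x"] sum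
    by simp
  define m where "m = a / b"
  have m: "m > 0" using a b by (simp add: m_def)
  define r where "r x = m^2 / x" for x :: real
  define r' where "r' x = - (m^2 / x^2)" for x :: real
  have rder: "(r has_field_derivative r' x) (at x within S)" if "x \<in> S" for x
    using that unfolding r_def r'_def S_def
    by (auto intro!: derivative_eq_intros simp: field_simps power2_eq_square)
  have rinj: "inj_on r S" unfolding r_def S_def inj_on_def using m by (auto simp: field_simps)
  have rS: "r ` S = S"
  proof (intro set_eqI iffI)
    fix x assume "x \<in> S"
    then have "r (r x) = x" "r x \<in> S" using m by (auto simp: r_def S_def)
    then show "x \<in> r ` S" by (metis image_eqI)
  qed (use m in \<open>auto simp: r_def S_def\<close>)
  have refl: "\<bar>r' x\<bar> * h1 (r x) = h2 x" if "x \<in> S" for x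
  proof -
    have x: "x > 0" using that by (simp add: S_def)
    have sr: "sqrt (r x) = m / sqrt x" using m x by (simp add: r_def real_sqrt_divide)
    have ph: "\<phi> (r x) = - \<phi> x" unfolding \<phi>_def sr using m x a b
      by (simp add: m_def field_simps)
    have NN': "N (- y) = N y" for y by (simp add: N_def)
    have sx: "sqrt x * sqrt x = x" using x by simp
    show ?thesis unfolding h1_def h2_def sr ph NN' r'_def using m x a b sx
      by (simp add: m_def field_simps power2_eq_square)
  qed
  have "integral S (\<lambda>x. \<bar>r' x\<bar> * h1 (r x)) = integral S h1"
    using has_absolute_integral_change_of_variables_1'[OF Sleb rder rinj, of h1 "integral S h1"] i1 rS
    by simp
  then have "integral S h2 = integral S h1"
    using integral_cong[of S "\<lambda>x. \<bar>r' x\<bar> * h1 (r x)" h2] refl by simp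
  then have I2: "integral S h2 = 1/2" using \<open>integral S h1 + integral S h2 = 1\<close> by simp
  have "((\<lambda>x. 2 * h2 x) has_integral 1) S"
    using has_integral_mult_right[OF integrable_integral[OF i2'], of 2] I2 by simp
  moreover have "2 * h2 x = a / sqrt (2*pi) * x powr (-3/2) * exp (- ((a - b*x)^2)/(2*x))" if "x \<in> S" for x
  proof -
    have x: "x > 0" using that by (simp add: S_def)
    have sx: "sqrt x * sqrt x = x" using x by simp
    have p: "x powr (-3/2) = 1 / (x * sqrt x)" using x by (rule powr32_old)
    have e: "(\<phi> x)^2 / 2 = (a - b*x)^2/(2*x)" unfolding \<phi>_def using x sx
      by (simp add: field_simps power2_eq_square)
    show ?thesis unfolding h2_def N_def p using e x
      by (simp add: field_simps)
  qed
  ultimately show ?thesis unfolding S_def using has_integral_cong[of "{0<..}"] S_def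
    by (smt (verit) has_integral_cong)
qed

lemma powr32: "(x::real) > 0 \<Longrightarrow> x powr (-3/2) = 1 / (x * sqrt x)"
proof -
  assume x: "x > 0"
  have e: "x powr 1 * x powr (1/2) * x powr (-3/2) = x powr (1 + 1/2 + (-3/2))"
    by (simp only: powr_add)
  have "(1 + 1/2 + (-3/2) :: real) = 0" by simp
  then have "x powr 1 * x powr (1/2) * x powr (-3/2) = 1" using e x by simp
  then have "x * sqrt x * x powr (-3/2) = 1" using x by (simp add: powr_half_sqrt)
  then show ?thesis using x by (simp add: field_simps)
qed

lemma powr32': "(x::real) > 0 \<Longrightarrow> x powr (3/2) = x * sqrt x"
proof -
  assume x: "x > 0"
  have e: "x powr 1 * x powr (1/2) = x powr (1 + 1/2)"
    by (simp only: powr_add)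
  have "(1 + 1/2 :: real) = 3/2" by simp
  then show ?thesis using e x by (simp add: powr_half_sqrt)
qed

lemma IG_stable:
  assumes g: "\<gamma> > 0"
  shows "IG_dens c \<gamma> u y = stable_half_dens c u y * exp (c * \<gamma> * u - \<gamma>^2 * y / 2)"
proof (cases "y > 0")
  case True
  have ex: "- (\<gamma>\<^sup>2 / (2 * y)) * (y - c / \<gamma> * u)\<^sup>2 = - (c\<^sup>2 * u\<^sup>2) / (2 * y) + (c * \<gamma> * u - \<gamma>^2 * y / 2)"
    using True g by (simp add: field_simps power2_eq_square)
  have ee: "exp (- (\<gamma>\<^sup>2 / (2 * y)) * (y - c / \<gamma> * u)\<^sup>2) = exp (- (c\<^sup>2 * u\<^sup>2) / (2 * y)) * exp (c * \<gamma> * u - \<gamma>^2 * y / 2)"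
    unfolding ex by (rule exp_add)
  have "IG_dens c \<gamma> u y = c * u / sqrt (2 * pi) * (1 / (y * sqrt y)) * (exp (- (c\<^sup>2 * u\<^sup>2) / (2 * y)) * exp (c * \<gamma> * u - \<gamma>^2 * y / 2))"
    unfolding IG_dens_def using True by (simp only: if_True powr32 ee)
  moreover have "stable_half_dens c u y = c * u / (sqrt (2 * pi) * (y * sqrt y)) * exp (- (c\<^sup>2 * u\<^sup>2) / (2 * y))"
    unfolding stable_half_dens_def using True by (simp only: if_True powr32')
  ultimately show ?thesis by simp
next
  case False
  then show ?thesis by (simp add: IG_dens_def stable_half_dens_def)
qed

lemma stable_pos: "c > 0 \<Longrightarrow> u > 0 \<Longrightarrow> y > 0 \<Longrightarrow> stable_half_dens c u y > 0"
  by (simp add: stable_half_dens_def)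

lemma stable_zero: "y \<le> 0 \<Longrightarrow> stable_half_dens c u y = 0"
  by (simp add: stable_half_dens_def)

definition kap :: "real \<Rightarrow> real \<Rightarrow> real \<Rightarrow> real" where
  "kap c \<gamma> T = (\<gamma> / (c * T)) powr (-1/2) * (1 / (2 * besselK (-1/2) (\<gamma> * (c * T))))
      * sqrt (2 * pi) / (c * T) * exp (- (\<gamma> * (c * T)))"

lemma GIG_IG:
  assumes c: "c > 0" and g: "\<gamma> > 0" and T: "T > 0"
  shows "f_GIG z (-1/2) (c * T) \<gamma> = kap c \<gamma> T * IG_dens c \<gamma> T z"
proof (cases "z > 0")
  case True
  have e1: "z powr (-1/2 - 1) = z powr (-3/2)" by simp
  have ex: "- (1/2) * ((c * T)\<^sup>2 / z + \<gamma>\<^sup>2 * z) = - (\<gamma> * (c * T)) + (- (\<gamma>\<^sup>2 / (2 * z)) * (z - c / \<gamma> * T)\<^sup>2)"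
    using True g by (simp add: field_simps power2_eq_square)
  have s: "sqrt (2 * pi) > 0" by simp
  have ee: "exp (- (1/2) * ((c * T)\<^sup>2 / z + \<gamma>\<^sup>2 * z)) = exp (- (\<gamma> * (c * T))) * exp (- (\<gamma>\<^sup>2 / (2 * z)) * (z - c / \<gamma> * T)\<^sup>2)"
    unfolding ex by (rule exp_add)
  have "f_GIG z (-1/2) (c * T) \<gamma> = (\<gamma> / (c * T)) powr (-1/2) * (1 / (2 * besselK (-1/2) (\<gamma> * (c * T))))
        * z powr (-3/2) * (exp (- (\<gamma> * (c * T))) * exp (- (\<gamma>\<^sup>2 / (2 * z)) * (z - c / \<gamma> * T)\<^sup>2))"
    unfolding f_GIG_def using True by (simp only: if_True e1 ee)
  moreover have "IG_dens c \<gamma> T z = c * T / sqrt (2 * pi) * z powr (-3/2) * exp (- (\<gamma>\<^sup>2 / (2 * z)) * (z - c / \<gamma> * T)\<^sup>2)"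
    unfolding IG_dens_def using True by simp
  moreover have "A*B*Z*(E1*E2) = (A*B * rr / d*E1)*(d / rr * Z * E2)" if "rr > 0" "d \<noteq> 0" for A B Z E1 E2 rr d :: real
    using that by (simp add: field_simps)
  ultimately show ?thesis unfolding kap_def using c T s by (metis mult_pos_pos order_less_irrefl)
next
  case False
  then show ?thesis by (simp add: IG_dens_def f_GIG_def)
qed


lemma prod3: "(\<Prod>i\<le>(2::nat). g i) = g 0 * g 1 * (g 2 :: real)"
  by (simp add: numeral_2_eq_2)
lemma prod2: "(\<Prod>i\<le>(1::nat). g i) = g 0 * (g 1 :: real)"
  by simp

lemma joint2:
  fixes c \<gamma> T s t :: real and x :: "nat \<Rightarrow> real"
  assumes c: "c > 0" and g: "\<gamma> > 0" and s: "0 < s" and st: "s < t" and tT: "t < T"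
  shows "bridge_joint_dens c T (\<lambda>z. f_GIG z (-1/2) (c*T) \<gamma>) 2 (\<lambda>i. if i = 0 then s else t) x
     = kap c \<gamma> T * (IG_dens c \<gamma> s (x 0) * IG_dens c \<gamma> (t-s) (x 1 - x 0) * IG_dens c \<gamma> (T-t) (x 2 - x 1))"
proof -
  have T: "T > 0" using s st tT by simp
  define f where "f = stable_half_dens c"
  define E where "E u y = exp (c * \<gamma> * u - \<gamma>^2 * y / 2)" for u y
  have IGf: "IG_dens c \<gamma> u y = f u y * E u y" for u y
    unfolding f_def E_def by (rule IG_stable[OF g])
  have L: "bridge_joint_dens c T (\<lambda>z. f_GIG z (-1/2) (c*T) \<gamma>) 2 (\<lambda>i. if i = 0 then s else t) x
     = f s (x 0) * f (t - s) (x 1 - x 0) * f (T - t) (x 2 - x 1) / f T (x 2) * (kap c \<gamma> T * (f T (x 2) * E T (x 2)))"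
    unfolding bridge_joint_dens_def Let_def prod3 GIG_IG[OF c g T] IGf by (simp add: f_def)
  have EE: "E s (x 0) * E (t - s) (x 1 - x 0) * E (T - t) (x 2 - x 1) = E T (x 2)"
    unfolding E_def by (simp add: exp_add[symmetric] field_simps)
  show ?thesis
  proof (cases "x 2 > 0")
    case True
    have "f T (x 2) > 0" unfolding f_def using c T True by (rule stable_pos)
    then show ?thesis unfolding L IGf using EE[symmetric] by (simp add: field_simps)
  next
    case False
    then have "x 0 \<le> 0 \<or> x 1 - x 0 \<le> 0 \<or> x 2 - x 1 \<le> 0" by linarith
    then have "f s (x 0) * f (t - s) (x 1 - x 0) * f (T - t) (x 2 - x 1) = 0"
      unfolding f_def using stable_zero by auto
    moreover have "f T (x 2) = 0" unfolding f_def using False stable_zero by simp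
    ultimately show ?thesis unfolding L IGf by (simp add: algebra_simps) blast
  qed
qed

lemma joint1:
  fixes c \<gamma> T t :: real and x :: "nat \<Rightarrow> real"
  assumes c: "c > 0" and g: "\<gamma> > 0" and t: "0 < t" and tT: "t < T"
  shows "bridge_joint_dens c T (\<lambda>z. f_GIG z (-1/2) (c*T) \<gamma>) 1 (\<lambda>i. t) x
     = kap c \<gamma> T * (IG_dens c \<gamma> t (x 0) * IG_dens c \<gamma> (T-t) (x 1 - x 0))"
proof -
  have T: "T > 0" using t tT by simp
  define f where "f = stable_half_dens c"
  define E where "E u y = exp (c * \<gamma> * u - \<gamma>^2 * y / 2)" for u y
  have IGf: "IG_dens c \<gamma> u y = f u y * E u y" for u y
    unfolding f_def E_def by (rule IG_stable[OF g])
  have L: "bridge_joint_dens c T (\<lambda>z. f_GIG z (-1/2) (c*T) \<gamma>) 1 (\<lambda>i. t) x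
     = f t (x 0) * f (T - t) (x 1 - x 0) / f T (x 1) * (kap c \<gamma> T * (f T (x 1) * E T (x 1)))"
    unfolding bridge_joint_dens_def Let_def prod2 GIG_IG[OF c g T] IGf by (simp add: f_def)
  have EE: "E t (x 0) * E (T - t) (x 1 - x 0) = E T (x 1)"
    unfolding E_def by (simp add: exp_add[symmetric] field_simps)
  show ?thesis
  proof (cases "x 1 > 0")
    case True
    have "f T (x 1) > 0" unfolding f_def using c T True by (rule stable_pos)
    then show ?thesis unfolding L IGf using EE[symmetric] by (simp add: field_simps)
  next
    case False
    then have "x 0 \<le> 0 \<or> x 1 - x 0 \<le> 0" by linarith
    then have "f t (x 0) * f (T - t) (x 1 - x 0) = 0"
      unfolding f_def using stable_zero by auto
    moreover have "f T (x 1) = 0" unfolding f_def using False stable_zero by simp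
    ultimately show ?thesis unfolding L IGf by (simp add: algebra_simps) blast
  qed
qed

lemma psf: "product_sigma_finite (\<lambda>_::nat. lborel)"
    by (simp add: product_sigma_finite_def lborel.sigma_finite_measure_axioms)

lemma nn_PiM2:
  fixes F :: "real \<Rightarrow> real \<Rightarrow> ennreal"
  assumes [measurable]: "(\<lambda>(a,b). F a b) \<in> borel_measurable (borel \<Otimes>\<^sub>M borel)"
  shows "(\<integral>\<^sup>+x. F (x 0) (x 1) \<partial>PiM {..1::nat} (\<lambda>_. lborel)) = (\<integral>\<^sup>+a. \<integral>\<^sup>+b. F a b \<partial>lborel \<partial>lborel)"
proof -
  have e: "{..1::nat} = insert 0 {1}" by auto
  have mm: "(\<lambda>x. F (x 0) (x 1)) \<in> borel_measurable (PiM (insert 0 {1::nat}) (\<lambda>_. lborel))" by measurable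
  have "(\<integral>\<^sup>+x. F (x 0) (x 1) \<partial>PiM {..1::nat} (\<lambda>_. lborel))
      = (\<integral>\<^sup>+ y. (\<integral>\<^sup>+ x. F ((x(0 := y)) 0) ((x(0 := y)) 1) \<partial>(Pi\<^sub>M {1::nat} (\<lambda>_. lborel))) \<partial>lborel)"
    unfolding e using product_sigma_finite.product_nn_integral_insert_rev[OF psf _ _ mm] by simp
  also have "\<dots> = (\<integral>\<^sup>+ y. (\<integral>\<^sup>+ x. F y (x 1) \<partial>(Pi\<^sub>M {1::nat} (\<lambda>_. lborel))) \<partial>lborel)"
    by simp
  also have "\<dots> = (\<integral>\<^sup>+a. \<integral>\<^sup>+b. F a b \<partial>lborel \<partial>lborel)"
  proof (rule nn_integral_cong)
    fix a
    have "F a \<in> borel_measurable lborel" by measurable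
    then show "(\<integral>\<^sup>+ x. F a (x 1) \<partial>(Pi\<^sub>M {1::nat} (\<lambda>_. lborel))) = (\<integral>\<^sup>+b. F a b \<partial>lborel)"
      by (rule product_sigma_finite.product_nn_integral_singleton[OF psf])
  qed
  finally show ?thesis .
qed

lemma nn_PiM3:
  fixes F :: "real \<Rightarrow> real \<Rightarrow> real \<Rightarrow> ennreal"
  assumes [measurable]: "(\<lambda>(a,b,c). F a b c) \<in> borel_measurable (borel \<Otimes>\<^sub>M borel \<Otimes>\<^sub>M borel)"
  shows "(\<integral>\<^sup>+x. F (x 0) (x 1) (x 2) \<partial>PiM {..2::nat} (\<lambda>_. lborel)) = (\<integral>\<^sup>+a. (\<integral>\<^sup>+b. (\<integral>\<^sup>+c. F a b c \<partial>lborel) \<partial>lborel) \<partial>lborel)"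
proof -
  have e: "{..2::nat} = insert 0 {1,2}" by auto
  have mm: "(\<lambda>x. F (x 0) (x 1) (x 2)) \<in> borel_measurable (PiM (insert 0 {1::nat,2}) (\<lambda>_. lborel))"
  proof -
    have "(\<lambda>x. (x 0, x 1, x 2)) \<in> PiM (insert 0 {1::nat,2}) (\<lambda>_. lborel) \<rightarrow>\<^sub>M borel \<Otimes>\<^sub>M borel \<Otimes>\<^sub>M borel"
      by measurable
    from measurable_compose[OF this, of "\<lambda>(a,b,c). F a b c"] show ?thesis by simp
  qed
  have m2: "(\<lambda>(b,c). F a b c) \<in> borel_measurable (borel \<Otimes>\<^sub>M borel)" for a
    by measurable
  have "(\<integral>\<^sup>+x. F (x 0) (x 1) (x 2) \<partial>PiM {..2::nat} (\<lambda>_. lborel))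
      = (\<integral>\<^sup>+ y. (\<integral>\<^sup>+ x. F ((x(0 := y)) 0) ((x(0 := y)) 1) ((x(0 := y)) 2) \<partial>(Pi\<^sub>M {1::nat,2} (\<lambda>_. lborel))) \<partial>lborel)"
    unfolding e using product_sigma_finite.product_nn_integral_insert_rev[OF psf _ _ mm] by simp
  also have "\<dots> = (\<integral>\<^sup>+ y. (\<integral>\<^sup>+ x. F y (x 1) (x 2) \<partial>(Pi\<^sub>M {1::nat,2} (\<lambda>_. lborel))) \<partial>lborel)"
    by simp
  also have "\<dots> = (\<integral>\<^sup>+a. (\<integral>\<^sup>+b. (\<integral>\<^sup>+c. F a b c \<partial>lborel) \<partial>lborel) \<partial>lborel)"
  proof (rule nn_integral_cong)
    fix a
    show "(\<integral>\<^sup>+ x. F a (x 1) (x 2) \<partial>(Pi\<^sub>M {1::nat,2} (\<lambda>_. lborel))) = (\<integral>\<^sup>+b. (\<integral>\<^sup>+c. F a b c \<partial>lborel) \<partial>lborel)"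
    proof -
      have e2: "{1::nat,2} = insert 1 {2}" by auto
      have mm2: "(\<lambda>x. F a (x 1) (x 2)) \<in> borel_measurable (PiM (insert 1 {2::nat}) (\<lambda>_. lborel))"
      proof -
        have "(\<lambda>x. (x 1, x 2)) \<in> PiM (insert 1 {2::nat}) (\<lambda>_. lborel) \<rightarrow>\<^sub>M borel \<Otimes>\<^sub>M borel"
          by measurable
        from measurable_compose[OF this m2[of a]] show ?thesis by simp
      qed
      have "(\<integral>\<^sup>+ x. F a (x 1) (x 2) \<partial>(Pi\<^sub>M {1::nat,2} (\<lambda>_. lborel)))
         = (\<integral>\<^sup>+ y. (\<integral>\<^sup>+ x. F a ((x(1 := y)) 1) ((x(1 := y)) 2) \<partial>(Pi\<^sub>M {2::nat} (\<lambda>_. lborel))) \<partial>lborel)"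
        using product_sigma_finite.product_nn_integral_insert_rev[OF psf _ _ mm2] by simp
      also have "\<dots> = (\<integral>\<^sup>+ y. (\<integral>\<^sup>+ x. F a y (x 2) \<partial>(Pi\<^sub>M {2::nat} (\<lambda>_. lborel))) \<partial>lborel)"
        by simp
      also have "\<dots> = (\<integral>\<^sup>+b. (\<integral>\<^sup>+c. F a b c \<partial>lborel) \<partial>lborel)"
      proof (rule nn_integral_cong)
        fix b
        have "F a b \<in> borel_measurable lborel" by measurable
        then show "(\<integral>\<^sup>+ x. F a b (x 2) \<partial>(Pi\<^sub>M {2::nat} (\<lambda>_. lborel))) = (\<integral>\<^sup>+c. F a b c \<partial>lborel)"
          by (rule product_sigma_finite.product_nn_integral_singleton[OF psf])
      qed
      finally show ?thesis .
    qed
  qed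
  finally show ?thesis .
qed

lemma IG_nn:
  assumes c: "c > 0" and g: "\<gamma> > 0" and u: "u > 0"
  shows "(\<integral>\<^sup>+y. ennreal (IG_dens c \<gamma> u y) \<partial>lborel) = 1"
proof -
  have cu: "c * u > 0" using c u by simp
  have H: "((\<lambda>x. (c*u) / sqrt (2*pi) * x powr (-3/2) * exp (- ((c*u - \<gamma>*x)^2)/(2*x))) has_integral 1) {0<..}"
    by (rule IG_has_integral[OF cu g])
  have "(\<integral>\<^sup>+ x. ennreal ((c*u) / sqrt (2*pi) * x powr (-3/2) * exp (- ((c*u - \<gamma>*x)^2)/(2*x))) * indicator {0<..} x \<partial>lborel) = ennreal 1"
    by (rule nn_integral_has_integral_lebesgue'[OF _ H]) (use cu in simp)
  moreover have "ennreal ((c*u) / sqrt (2*pi) * x powr (-3/2) * exp (- ((c*u - \<gamma>*x)^2)/(2*x))) * indicator {0<..} x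
      = ennreal (IG_dens c \<gamma> u x)" for x
  proof (cases "x > 0")
    case True
    have "- (\<gamma>\<^sup>2 / (2 * x)) * (x - c / \<gamma> * u)\<^sup>2 = - ((c*u - \<gamma>*x)^2)/(2*x)"
      using True g by (simp add: field_simps power2_eq_square)
    then show ?thesis using True by (simp add: IG_dens_def)
  next
    case False
    then show ?thesis by (simp add: IG_dens_def)
  qed
  ultimately show ?thesis by simp
qed

lemma IG_shift:
  assumes c: "c > 0" and g: "\<gamma> > 0" and u: "u > 0"
  shows "(\<integral>\<^sup>+y. ennreal (IG_dens c \<gamma> u (y - x)) \<partial>lborel) = 1"
proof -
  have "(\<integral>\<^sup>+y. ennreal (IG_dens c \<gamma> u y) \<partial>lborel) = ennreal \<bar>1\<bar> * (\<integral>\<^sup>+y. ennreal (IG_dens c \<gamma> u (- x + 1 * y)) \<partial>lborel)"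
    by (rule nn_integral_real_affine) auto
  then show ?thesis using IG_nn[OF c g u] by simp
qed

lemma IG_nonneg: "c > 0 \<Longrightarrow> u > 0 \<Longrightarrow> IG_dens c \<gamma> u y \<ge> 0"
  by (simp add: IG_dens_def)

lemma Hn_meas[measurable]:
  assumes [measurable]: "B \<in> sets borel"
  shows "(\<lambda>x. \<integral>\<^sup>+y. ennreal (indicator B y * IG_dens c \<gamma> u (y - x)) \<partial>lborel) \<in> borel_measurable borel"
  by measurable

lemma Hn_le:
  assumes c: "c > 0" and g: "\<gamma> > 0" and u: "u > 0"
  shows "(\<integral>\<^sup>+y. ennreal (indicator B y * IG_dens c \<gamma> u (y - x)) \<partial>lborel) \<le> 1"
proof -
  have "(\<integral>\<^sup>+y. ennreal (indicator B y * IG_dens c \<gamma> u (y - x)) \<partial>lborel) \<le> (\<integral>\<^sup>+y. ennreal (IG_dens c \<gamma> u (y - x)) \<partial>lborel)"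
    by (rule nn_integral_mono) (auto simp: indicator_def)
  then show ?thesis using IG_shift[OF c g u] by simp
qed

lemma H_eq:
  assumes c: "c > 0" and g: "\<gamma> > 0" and u: "u > 0" and [measurable]: "B \<in> sets borel"
  shows "(LINT y:B|lborel. IG_dens c \<gamma> u (y - x)) = enn2real (\<integral>\<^sup>+y. ennreal (indicator B y * IG_dens c \<gamma> u (y - x)) \<partial>lborel)"
  unfolding set_lebesgue_integral_def
  by (subst integral_eq_nn_integral) (auto simp: IG_nonneg[OF c u])


lemma inner_int:
  assumes c: "c > 0" and g: "\<gamma> > 0" and u: "u > 0"
  shows "(\<integral>\<^sup>+z. ennreal (K * (P * IG_dens c \<gamma> u (z - b))) * R \<partial>lborel) = ennreal (K * P) * R"
proof -
  have "(\<integral>\<^sup>+z. ennreal (K * (P * IG_dens c \<gamma> u (z - b))) * R \<partial>lborel)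
      = (\<integral>\<^sup>+z. (ennreal (K * P) * R) * ennreal (IG_dens c \<gamma> u (z - b)) \<partial>lborel)"
  proof (rule nn_integral_cong)
    fix z
    have "ennreal (K * (P * IG_dens c \<gamma> u (z - b))) = ennreal (K * P) * ennreal (IG_dens c \<gamma> u (z - b))"
      by (subst mult.assoc[symmetric], rule ennreal_mult'', rule IG_nonneg[OF c u])
    then show "ennreal (K * (P * IG_dens c \<gamma> u (z - b))) * R = (ennreal (K * P) * R) * ennreal (IG_dens c \<gamma> u (z - b))"
      by (simp add: mult_ac)
  qed
  also have "\<dots> = (ennreal (K * P) * R) * (\<integral>\<^sup>+z. ennreal (IG_dens c \<gamma> u (z - b)) \<partial>lborel)"
    by (rule nn_integral_cmult) measurable
  also have "\<dots> = ennreal (K * P) * R" using IG_shift[OF c g u] by simp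
  finally show ?thesis .
qed

lemma inner_int2:
  assumes c: "c > 0" and g: "\<gamma> > 0" and u: "u > 0" and [measurable]: "B \<in> sets borel"
  shows "(\<integral>\<^sup>+b. ennreal (K * (P * IG_dens c \<gamma> u (b - a))) * (R * indicator B b) \<partial>lborel)
     = ennreal (K * P) * R * (\<integral>\<^sup>+y. ennreal (indicator B y * IG_dens c \<gamma> u (y - a)) \<partial>lborel)"
proof -
  have "(\<integral>\<^sup>+b. ennreal (K * (P * IG_dens c \<gamma> u (b - a))) * (R * indicator B b) \<partial>lborel)
      = (\<integral>\<^sup>+b. (ennreal (K * P) * R) * ennreal (indicator B b * IG_dens c \<gamma> u (b - a)) \<partial>lborel)"
  proof (rule nn_integral_cong)
    fix b
    have "ennreal (K * (P * IG_dens c \<gamma> u (b - a))) = ennreal (K * P) * ennreal (IG_dens c \<gamma> u (b - a))"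
      by (subst mult.assoc[symmetric], rule ennreal_mult'', rule IG_nonneg[OF c u])
    then show "ennreal (K * (P * IG_dens c \<gamma> u (b - a))) * (R * indicator B b) = (ennreal (K * P) * R) * ennreal (indicator B b * IG_dens c \<gamma> u (b - a))"
      by (simp add: mult_ac indicator_def)
  qed
  also have "\<dots> = (ennreal (K * P) * R) * (\<integral>\<^sup>+b. ennreal (indicator B b * IG_dens c \<gamma> u (b - a)) \<partial>lborel)"
    by (rule nn_integral_cmult) measurable
  finally show ?thesis .
qed

theorem mainTheorem4:
  fixes M :: "'a measure" and \<xi> :: "real \<Rightarrow> 'a \<Rightarrow> real" and c \<gamma> T s t :: real
  assumes "c > 0" and "\<gamma> > 0" and "T > 0"
    and "stable_half_random_bridge M c T (\<lambda>z. f_GIG z (-1/2) (c * T) \<gamma>) \<xi>"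
    and "0 \<le> s" and "s < t" and "t < T"
  shows "\<forall>A\<in>sets borel. \<forall>B\<in>sets borel.
           measure M {\<omega>\<in>space M. \<xi> s \<omega> \<in> A \<and> \<xi> t \<omega> \<in> B}
             = (\<integral>\<omega>. indicator A (\<xi> s \<omega>)
                   * (LINT y:B|lborel. IG_dens c \<gamma> (t - s) (y - \<xi> s \<omega>)) \<partial>M)"
proof (intro ballI)
  fix A B :: "real set"
  assume AB[measurable]: "A \<in> sets borel" "B \<in> sets borel"
  note c = assms(1) and g = assms(2) and T = assms(3) and s0 = assms(5) and st = assms(6) and tT = assms(7)
  have ps: "prob_space M" and meas: "\<And>u. u \<in> {0..T} \<Longrightarrow> \<xi> u \<in> borel_measurable M"
    and ae0: "AE \<omega> in M. \<xi> 0 \<omega> = 0"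
    and dist: "\<And>n tt. (\<forall>i<n. 0 < tt i \<and> tt i < T) \<and> (\<forall>i j. i < j \<and> j < n \<longrightarrow> tt i < tt j) \<Longrightarrow>
        distr M (PiM {..n} (\<lambda>_. lborel)) (\<lambda>\<omega>. \<lambda>i\<in>{..n}. if i < n then \<xi> (tt i) \<omega> else \<xi> T \<omega>)
          = density (PiM {..n} (\<lambda>_. lborel)) (\<lambda>x. ennreal (bridge_joint_dens c T (\<lambda>z. f_GIG z (-1/2) (c * T) \<gamma>) n tt x))"
    using assms(4) unfolding stable_half_random_bridge_def by blast+
  interpret prob_space M by (rule ps)
  have ts: "t - s > 0" using st by simp
  have mst[measurable]: "\<xi> s \<in> borel_measurable M" "\<xi> t \<in> borel_measurable M" "\<xi> T \<in> borel_measurable M"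
    using meas s0 st tT T by auto
  define Hn where "Hn x = (\<integral>\<^sup>+y. ennreal (indicator B y * IG_dens c \<gamma> (t - s) (y - x)) \<partial>lborel)" for x
  have Hn_m[measurable]: "Hn \<in> borel_measurable borel" unfolding Hn_def[abs_def] by measurable
  have Hn1: "Hn x \<le> 1" for x unfolding Hn_def by (rule Hn_le[OF c g ts])
  have Heq: "(LINT y:B|lborel. IG_dens c \<gamma> (t - s) (y - x)) = enn2real (Hn x)" for x
    unfolding Hn_def by (rule H_eq[OF c g ts]) simp
  have key: "emeasure M {\<omega>\<in>space M. \<xi> s \<omega> \<in> A \<and> \<xi> t \<omega> \<in> B}
      = (\<integral>\<^sup>+\<omega>. indicator A (\<xi> s \<omega>) * Hn (\<xi> s \<omega>) \<partial>M)"
  proof (cases "s = 0")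
    case True
    have t: "t > 0" using st True by simp
    define tt where "tt = (\<lambda>i::nat. t)"
    define P where "P = PiM {..1::nat} (\<lambda>_. lborel :: real measure)"
    define X where "X = (\<lambda>\<omega>. \<lambda>i\<in>{..1::nat}. if i < 1 then \<xi> (tt i) \<omega> else \<xi> T \<omega>)"
    define K where "K = kap c \<gamma> T"
    define G where "G x = ennreal (K * (IG_dens c \<gamma> t (x 0) * IG_dens c \<gamma> (T-t) (x 1 - x 0)))" for x :: "nat \<Rightarrow> real"
    have cond: "(\<forall>i<1. 0 < tt i \<and> tt i < T) \<and> (\<forall>i j. i < j \<and> j < (1::nat) \<longrightarrow> tt i < tt j)"
      using t tT by (auto simp: tt_def)
    have D: "distr M P X = density P G"
      using dist[OF cond] joint1[OF c g t tT] unfolding P_def X_def G_def K_def tt_def by simp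
    have Xm[measurable]: "X \<in> measurable M P"
      unfolding X_def P_def
    proof (rule measurable_restrict)
      fix i :: nat assume "i \<in> {..1}"
      show "(\<lambda>\<omega>. if i < 1 then \<xi> (tt i) \<omega> else \<xi> T \<omega>) \<in> measurable M lborel"
        using mst by (cases "i < 1") (simp_all add: tt_def)
    qed
    have X0: "X \<omega> 0 = \<xi> t \<omega>" for \<omega>
      by (auto simp: X_def tt_def)
    have Gm[measurable]: "G \<in> borel_measurable P" unfolding G_def[abs_def] P_def by measurable
    have Tt: "T - t > 0" using tT by simp
    have int1: "(\<integral>\<^sup>+x. G x * indicator {x\<in>space P. x 0 \<in> C} x \<partial>P) = (\<integral>\<^sup>+a. ennreal (K * IG_dens c \<gamma> t a) * indicator C a \<partial>lborel)"
      if [measurable]: "C \<in> sets borel" for C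
    proof -
      have "(\<integral>\<^sup>+x. G x * indicator {x\<in>space P. x 0 \<in> C} x \<partial>P)
          = (\<integral>\<^sup>+x. ennreal (K * (IG_dens c \<gamma> t (x 0) * IG_dens c \<gamma> (T-t) (x 1 - x 0))) * indicator C (x 0) \<partial>P)"
        by (rule nn_integral_cong) (auto simp: G_def indicator_def)
      also have "\<dots> = (\<integral>\<^sup>+a. (\<integral>\<^sup>+z. ennreal (K * (IG_dens c \<gamma> t a * IG_dens c \<gamma> (T-t) (z - a))) * indicator C a \<partial>lborel) \<partial>lborel)"
        unfolding P_def by (rule nn_PiM2[where F="\<lambda>a z. ennreal (K * (IG_dens c \<gamma> t a * IG_dens c \<gamma> (T-t) (z - a))) * indicator C a"]) measurable
      also have "\<dots> = (\<integral>\<^sup>+a. ennreal (K * IG_dens c \<gamma> t a) * indicator C a \<partial>lborel)"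
        by (simp only: inner_int[OF c g Tt])
      finally show ?thesis .
    qed
    have Kmul: "ennreal (K * IG_dens c \<gamma> t a) = ennreal K * ennreal (IG_dens c \<gamma> t a)" for a
      by (rule ennreal_mult'', rule IG_nonneg[OF c t])
    have K1: "ennreal K = 1"
    proof -
      have "1 = emeasure M (space M)" by (simp add: emeasure_space_1)
      also have "\<dots> = emeasure (distr M P X) (space P)"
      proof -
        have "X -` space P \<inter> space M = space M" using measurable_space[OF Xm] by auto
        then show ?thesis by (simp add: emeasure_distr[OF Xm])
      qed
      also have "\<dots> = (\<integral>\<^sup>+x. G x * indicator {x\<in>space P. x 0 \<in> UNIV} x \<partial>P)"
        unfolding D by (subst emeasure_density[OF Gm]) (auto intro!: nn_integral_cong)
      also have "\<dots> = (\<integral>\<^sup>+a. ennreal K * ennreal (IG_dens c \<gamma> t a) \<partial>lborel)"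
        by (subst int1) (auto simp: Kmul)
      also have "\<dots> = ennreal K * (\<integral>\<^sup>+a. ennreal (IG_dens c \<gamma> t a) \<partial>lborel)"
        by (rule nn_integral_cmult) measurable
      also have "\<dots> = ennreal K" using IG_nn[OF c g t] by simp
      finally show ?thesis ..
    qed
    have Hn0: "Hn 0 = (\<integral>\<^sup>+a. ennreal (IG_dens c \<gamma> t a) * indicator B a \<partial>lborel)"
      unfolding Hn_def True by (auto intro!: nn_integral_cong simp: indicator_def)
    have EB: "emeasure M {\<omega>\<in>space M. \<xi> t \<omega> \<in> B} = Hn 0"
    proof -
      have Sm: "{x\<in>space P. x 0 \<in> B} \<in> sets P" unfolding P_def by measurable
      have "{\<omega>\<in>space M. \<xi> t \<omega> \<in> B} = X -` {x\<in>space P. x 0 \<in> B} \<inter> space M"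
        using measurable_space[OF Xm] by (auto simp: X0)
      then have "emeasure M {\<omega>\<in>space M. \<xi> t \<omega> \<in> B} = emeasure (distr M P X) {x\<in>space P. x 0 \<in> B}"
        by (simp only: emeasure_distr[OF Xm Sm])
      also have "\<dots> = (\<integral>\<^sup>+x. G x * indicator {x\<in>space P. x 0 \<in> B} x \<partial>P)"
        unfolding D by (rule emeasure_density[OF Gm Sm])
      also have "\<dots> = Hn 0" unfolding int1[OF AB(2)] Hn0 Kmul K1 by simp
      finally show ?thesis .
    qed
    have ae: "AE \<omega> in M. (\<omega> \<in> {\<omega>\<in>space M. \<xi> s \<omega> \<in> A \<and> \<xi> t \<omega> \<in> B}) = (\<omega> \<in> {\<omega>\<in>space M. 0 \<in> A \<and> \<xi> t \<omega> \<in> B})"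
      using ae0 by eventually_elim (auto simp: True)
    have "emeasure M {\<omega>\<in>space M. \<xi> s \<omega> \<in> A \<and> \<xi> t \<omega> \<in> B} = emeasure M {\<omega>\<in>space M. 0 \<in> A \<and> \<xi> t \<omega> \<in> B}"
      by (rule emeasure_eq_AE[OF ae]) measurable
    also have "\<dots> = indicator A 0 * Hn 0"
      using EB by (cases "0 \<in> A") auto
    also have "\<dots> = (\<integral>\<^sup>+\<omega>. indicator A 0 * Hn 0 \<partial>M)" by (simp add: emeasure_space_1)
    also have "\<dots> = (\<integral>\<^sup>+\<omega>. indicator A (\<xi> s \<omega>) * Hn (\<xi> s \<omega>) \<partial>M)"
      by (rule nn_integral_cong_AE) (use ae0 in \<open>eventually_elim, simp add: True\<close>)
    finally show ?thesis .
  next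
    case False
    then have s: "s > 0" using s0 by simp
    define tt where "tt = (\<lambda>i::nat. if i = 0 then s else t)"
    define P where "P = PiM {..2::nat} (\<lambda>_. lborel :: real measure)"
    define X where "X = (\<lambda>\<omega>. \<lambda>i\<in>{..2::nat}. if i < 2 then \<xi> (tt i) \<omega> else \<xi> T \<omega>)"
    define K where "K = kap c \<gamma> T"
    define G where "G x = ennreal (K * (IG_dens c \<gamma> s (x 0) * IG_dens c \<gamma> (t-s) (x 1 - x 0) * IG_dens c \<gamma> (T-t) (x 2 - x 1)))" for x :: "nat \<Rightarrow> real"
    have cond: "(\<forall>i<2. 0 < tt i \<and> tt i < T) \<and> (\<forall>i j. i < j \<and> j < (2::nat) \<longrightarrow> tt i < tt j)"
      using s st tT by (auto simp: tt_def)
    have D: "distr M P X = density P G"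
      using dist[OF cond] joint2[OF c g s st tT] unfolding P_def X_def G_def K_def tt_def by simp
    have Xm[measurable]: "X \<in> measurable M P"
      unfolding X_def P_def
    proof (rule measurable_restrict)
      fix i :: nat assume "i \<in> {..2}"
      show "(\<lambda>\<omega>. if i < 2 then \<xi> (tt i) \<omega> else \<xi> T \<omega>) \<in> measurable M lborel"
        using mst by (cases "i < 2"; cases "i = 0") (simp_all add: tt_def)
    qed
    have X0: "X \<omega> 0 = \<xi> s \<omega>" and X1: "X \<omega> 1 = \<xi> t \<omega>" and X1': "X \<omega> (Suc 0) = \<xi> t \<omega>" for \<omega>
      by (auto simp: X_def tt_def)
    have Gm[measurable]: "G \<in> borel_measurable P" unfolding G_def[abs_def] P_def by measurable
    have LHS: "emeasure M {\<omega>\<in>space M. \<xi> s \<omega> \<in> A \<and> \<xi> t \<omega> \<in> B}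
        = (\<integral>\<^sup>+a. (\<integral>\<^sup>+b. (\<integral>\<^sup>+z. ennreal (K * (IG_dens c \<gamma> s a * IG_dens c \<gamma> (t-s) (b - a) * IG_dens c \<gamma> (T-t) (z - b))) * (indicator A a * indicator B b) \<partial>lborel) \<partial>lborel) \<partial>lborel)"
    proof -
      have Sm: "{x\<in>space P. x 0 \<in> A \<and> x 1 \<in> B} \<in> sets P" unfolding P_def by measurable
      have "{\<omega>\<in>space M. \<xi> s \<omega> \<in> A \<and> \<xi> t \<omega> \<in> B} = X -` {x\<in>space P. x 0 \<in> A \<and> x 1 \<in> B} \<inter> space M"
        using measurable_space[OF Xm] by (auto simp: X0 X1 X1')
      then have "emeasure M {\<omega>\<in>space M. \<xi> s \<omega> \<in> A \<and> \<xi> t \<omega> \<in> B} = emeasure (distr M P X) {x\<in>space P. x 0 \<in> A \<and> x 1 \<in> B}"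
        by (simp only: emeasure_distr[OF Xm Sm])
      also have "\<dots> = (\<integral>\<^sup>+x. G x * indicator {x\<in>space P. x 0 \<in> A \<and> x 1 \<in> B} x \<partial>P)"
        unfolding D by (rule emeasure_density[OF Gm Sm])
      also have "\<dots> = (\<integral>\<^sup>+x. ennreal (K * (IG_dens c \<gamma> s (x 0) * IG_dens c \<gamma> (t-s) (x 1 - x 0) * IG_dens c \<gamma> (T-t) (x 2 - x 1))) * (indicator A (x 0) * indicator B (x 1)) \<partial>P)"
        by (rule nn_integral_cong) (auto simp: G_def indicator_def)
      also have "\<dots> = (\<integral>\<^sup>+a. (\<integral>\<^sup>+b. (\<integral>\<^sup>+z. ennreal (K * (IG_dens c \<gamma> s a * IG_dens c \<gamma> (t-s) (b - a) * IG_dens c \<gamma> (T-t) (z - b))) * (indicator A a * indicator B b) \<partial>lborel) \<partial>lborel) \<partial>lborel)"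
        unfolding P_def by (rule nn_PiM3[where F="\<lambda>a b z. ennreal (K * (IG_dens c \<gamma> s a * IG_dens c \<gamma> (t-s) (b - a) * IG_dens c \<gamma> (T-t) (z - b))) * (indicator A a * indicator B b)"]) measurable
      finally show ?thesis .
    qed
    have RHS: "(\<integral>\<^sup>+\<omega>. indicator A (\<xi> s \<omega>) * Hn (\<xi> s \<omega>) \<partial>M)
        = (\<integral>\<^sup>+a. (\<integral>\<^sup>+b. (\<integral>\<^sup>+z. ennreal (K * (IG_dens c \<gamma> s a * IG_dens c \<gamma> (t-s) (b - a) * IG_dens c \<gamma> (T-t) (z - b))) * (indicator A a * Hn a) \<partial>lborel) \<partial>lborel) \<partial>lborel)"
    proof -
      have "(\<integral>\<^sup>+\<omega>. indicator A (\<xi> s \<omega>) * Hn (\<xi> s \<omega>) \<partial>M) = (\<integral>\<^sup>+\<omega>. indicator A (X \<omega> 0) * Hn (X \<omega> 0) \<partial>M)"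
        by (simp add: X0)
      also have "\<dots> = (\<integral>\<^sup>+x. indicator A (x 0) * Hn (x 0) \<partial>distr M P X)"
        by (rule nn_integral_distr[symmetric, OF Xm]) (unfold P_def, measurable)
      also have "\<dots> = (\<integral>\<^sup>+x. G x * (indicator A (x 0) * Hn (x 0)) \<partial>P)"
        unfolding D by (rule nn_integral_density[OF Gm]) (unfold P_def, measurable)
      also have "\<dots> = (\<integral>\<^sup>+a. (\<integral>\<^sup>+b. (\<integral>\<^sup>+z. ennreal (K * (IG_dens c \<gamma> s a * IG_dens c \<gamma> (t-s) (b - a) * IG_dens c \<gamma> (T-t) (z - b))) * (indicator A a * Hn a) \<partial>lborel) \<partial>lborel) \<partial>lborel)"
        unfolding P_def G_def by (rule nn_PiM3[where F="\<lambda>a b z. ennreal (K * (IG_dens c \<gamma> s a * IG_dens c \<gamma> (t-s) (b - a) * IG_dens c \<gamma> (T-t) (z - b))) * (indicator A a * Hn a)"]) measurable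
      finally show ?thesis .
    qed
    have Tt: "T - t > 0" using tT by simp
    have "emeasure M {\<omega>\<in>space M. \<xi> s \<omega> \<in> A \<and> \<xi> t \<omega> \<in> B}
        = (\<integral>\<^sup>+a. (\<integral>\<^sup>+b. ennreal (K * (IG_dens c \<gamma> s a * IG_dens c \<gamma> (t-s) (b - a))) * (indicator A a * indicator B b) \<partial>lborel) \<partial>lborel)"
      unfolding LHS by (simp only: inner_int[OF c g Tt])
    also have "\<dots> = (\<integral>\<^sup>+a. ennreal (K * IG_dens c \<gamma> s a) * indicator A a * Hn a \<partial>lborel)"
      unfolding Hn_def by (simp only: inner_int2[OF c g ts AB(2)])
    also have "\<dots> = (\<integral>\<^sup>+a. (\<integral>\<^sup>+b. ennreal (K * (IG_dens c \<gamma> s a * IG_dens c \<gamma> (t-s) (b - a))) * (indicator A a * Hn a) \<partial>lborel) \<partial>lborel)"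
      by (simp only: inner_int[OF c g ts] mult.assoc)
    also have "\<dots> = (\<integral>\<^sup>+\<omega>. indicator A (\<xi> s \<omega>) * Hn (\<xi> s \<omega>) \<partial>M)"
      unfolding RHS by (simp only: inner_int[OF c g Tt])
    finally show ?thesis .
  qed
  have "(\<integral>\<omega>. indicator A (\<xi> s \<omega>) * (LINT y:B|lborel. IG_dens c \<gamma> (t - s) (y - \<xi> s \<omega>)) \<partial>M)
      = (\<integral>\<omega>. indicator A (\<xi> s \<omega>) * enn2real (Hn (\<xi> s \<omega>)) \<partial>M)"
    by (simp add: Heq)
  also have "\<dots> = enn2real (\<integral>\<^sup>+\<omega>. ennreal (indicator A (\<xi> s \<omega>) * enn2real (Hn (\<xi> s \<omega>))) \<partial>M)"
    by (rule integral_eq_nn_integral) auto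
  also have "(\<integral>\<^sup>+\<omega>. ennreal (indicator A (\<xi> s \<omega>) * enn2real (Hn (\<xi> s \<omega>))) \<partial>M)
      = (\<integral>\<^sup>+\<omega>. indicator A (\<xi> s \<omega>) * Hn (\<xi> s \<omega>) \<partial>M)"
  proof (rule nn_integral_cong)
    fix \<omega>
    have "Hn (\<xi> s \<omega>) \<noteq> \<top>" using Hn1[of "\<xi> s \<omega>"] by (auto simp: top_unique)
    then show "ennreal (indicator A (\<xi> s \<omega>) * enn2real (Hn (\<xi> s \<omega>))) = indicator A (\<xi> s \<omega>) * Hn (\<xi> s \<omega>)"
      by (auto simp: indicator_def ennreal_enn2real_if)
  qed
  finally show "measure M {\<omega>\<in>space M. \<xi> s \<omega> \<in> A \<and> \<xi> t \<omega> \<in> B}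
             = (\<integral>\<omega>. indicator A (\<xi> s \<omega>) * (LINT y:B|lborel. IG_dens c \<gamma> (t - s) (y - \<xi> s \<omega>)) \<partial>M)"
    by (simp add: measure_def key)
qed

end
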